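(* Let $m\ge3$ be odd, $Q_{4m}=\langle a,b\mid a^m=1=b^4,\ b^{-1}ab=a^{-1}\rangle$, $s$ an odd prime with $\gcd(s,m)=1$, $q$ a power of $s$, and $\zeta$ a primitive $m$-th root of unity in $\overline{\mathbb{F}}_s$. Suppose $\theta:=\zeta+\zeta^{-1}\in\mathbb{F}_q$ and $\zeta\notin\mathbb{F}_q$. Let $\alpha,\beta\in\mathbb{F}_q$ satisfy $\alpha^2+\beta^2=\theta^2-4$, put $A=\begin{pmatrix}\alpha&\beta\\\beta&-\alpha\end{pmatrix}$, $\tilde A=\frac{\theta}{2}I+\frac12A$ and $B=\begin{pmatrix}0&-1\\1&0\end{pmatrix}$. Then $\beta\ne0$, the assignment $\mu(a)=\tilde A$, $\mu(b)=B$ defines a faithful irreducible representation $\mu:Q_{4m}\to GL_2(\mathbb{F}_q)$, and $\mu$ is equivalent over $\overline{\mathbb{F}}_s$ to the representation $\tau$ given by $\tau(a)=\begin{pmatrix}\zeta&0\\0&\zeta^{-1}\end{pmatrix}$, $\tau(b)=\begin{pmatrix}0&-1\\1&0\end{pmatrix}$.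
   Context: $\overline{\mathbb{F}}_s$ is an algebraic closure of $\mathbb{F}_s$, and $\mathbb{F}_q$ is its subfield with $q$ elements. *)

theory Defs
  imports "HOL-Analysis.Analysis" "HOL-Computational_Algebra.Polynomial"
begin

definition is_subfield :: "'k::field set \<Rightarrow> bool" where
  "is_subfield K \<longleftrightarrow> 0 \<in> K \<and> 1 \<in> K \<and>
     (\<forall>x\<in>K. \<forall>y\<in>K. x + y \<in> K \<and> x - y \<in> K \<and> x * y \<in> K) \<and>
     (\<forall>x\<in>K. x \<noteq> 0 \<longrightarrow> inverse x \<in> K)"

definition algebraically_closed_field :: "'k::field itself \<Rightarrow> bool" where
  "algebraically_closed_field _ \<longleftrightarrow>
     (\<forall>p :: 'k poly. degree p \<ge> 1 \<longrightarrow> (\<exists>x. poly p x = 0))"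

definition is_alg_closure_of_prime_field :: "'k::field itself \<Rightarrow> nat \<Rightarrow> bool" where
  "is_alg_closure_of_prime_field T s \<longleftrightarrow> prime s \<and> of_nat s = (0::'k) \<and>
     algebraically_closed_field T \<and>
     (\<forall>x::'k. \<exists>p :: 'k poly. p \<noteq> 0 \<and> (\<forall>i. coeff p i \<in> range of_nat) \<and> poly p x = 0)"

definition primitive_root_of_unity :: "nat \<Rightarrow> 'k::field \<Rightarrow> bool" where
  "primitive_root_of_unity m z \<longleftrightarrow> z ^ m = 1 \<and> (\<forall>k. 0 < k \<and> k < m \<longrightarrow> z ^ k \<noteq> 1)"

definition mat2 :: "'a \<Rightarrow> 'a \<Rightarrow> 'a \<Rightarrow> 'a \<Rightarrow> 'a^2^2" where
  "mat2 a b c d = (\<chi> i j. if i = 1 then (if j = 1 then a else b) else (if j = 1 then c else d))"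

definition vec_over :: "'k set \<Rightarrow> ('k^2) set" where
  "vec_over K = {v. \<forall>i. v $ i \<in> K}"

definition GL2 :: "'k::field set \<Rightarrow> ('k^2^2) set" where
  "GL2 K = {M. (\<forall>i j. M $ i $ j \<in> K) \<and> invertible M}"

text \<open>The group Q_{4m} = <a,b | a^m = 1 = b^4, b^{-1} a b = a^{-1}> realised concretely:
  the pair (i,j) with i < m, j < 4 stands for a^i b^j; using b^j a^k = a^((-1)^j k) b^j.\<close>
definition Q_carrier :: "nat \<Rightarrow> (nat \<times> nat) set" where
  "Q_carrier m = {0..<m} \<times> {0..<4}"

definition Q_mult :: "nat \<Rightarrow> nat \<times> nat \<Rightarrow> nat \<times> nat \<Rightarrow> nat \<times> nat" where
  "Q_mult m x y = ((fst x + (if even (snd x) then fst y else m - fst y)) mod m,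
                   (snd x + snd y) mod 4)"

definition Q_a :: "nat \<times> nat" where "Q_a = (1, 0)"
definition Q_b :: "nat \<times> nat" where "Q_b = (0, 1)"

definition is_rep2 :: "nat \<Rightarrow> 'k::field set \<Rightarrow> (nat \<times> nat \<Rightarrow> 'k^2^2) \<Rightarrow> bool" where
  "is_rep2 m K \<rho> \<longleftrightarrow> (\<forall>g\<in>Q_carrier m. \<rho> g \<in> GL2 K) \<and>
     (\<forall>g\<in>Q_carrier m. \<forall>h\<in>Q_carrier m. \<rho> (Q_mult m g h) = \<rho> g ** \<rho> h)"

definition faithful_rep :: "nat \<Rightarrow> (nat \<times> nat \<Rightarrow> 'k^2^2) \<Rightarrow> bool" where
  "faithful_rep m \<rho> \<longleftrightarrow> inj_on \<rho> (Q_carrier m)"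

definition subspace_over :: "'k::field set \<Rightarrow> ('k^2) set \<Rightarrow> bool" where
  "subspace_over K W \<longleftrightarrow> W \<subseteq> vec_over K \<and> 0 \<in> W \<and>
     (\<forall>v\<in>W. \<forall>w\<in>W. v + w \<in> W) \<and> (\<forall>c\<in>K. \<forall>w\<in>W. c *s w \<in> W)"

definition irreducible_rep :: "nat \<Rightarrow> 'k::field set \<Rightarrow> (nat \<times> nat \<Rightarrow> 'k^2^2) \<Rightarrow> bool" where
  "irreducible_rep m K \<rho> \<longleftrightarrow>
     \<not> (\<exists>W. subspace_over K W \<and> W \<noteq> {0} \<and> W \<noteq> vec_over K \<and>
            (\<forall>g\<in>Q_carrier m. \<forall>w\<in>W. \<rho> g *v w \<in> W))"

text \<open>Equivalence over the whole (algebraically closed) field.\<close>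
definition equivalent_reps :: "nat \<Rightarrow> (nat \<times> nat \<Rightarrow> 'k::field^2^2) \<Rightarrow> (nat \<times> nat \<Rightarrow> 'k^2^2) \<Rightarrow> bool" where
  "equivalent_reps m \<rho> \<sigma> \<longleftrightarrow>
     (\<exists>P. invertible P \<and> (\<forall>g\<in>Q_carrier m. P ** \<rho> g = \<sigma> g ** P))"

end

theory Submission
  imports Defs
begin


lemma mat2_nth[simp]: "mat2 a b c d $ 1 $ 1 = a" "mat2 a b c d $ 1 $ 2 = b"
  "mat2 a b c d $ 2 $ 1 = c" "mat2 a b c d $ 2 $ 2 = d"
  by (simp_all add: mat2_def)

lemma mat2_eta: "M = mat2 (M$1$1) (M$1$2) (M$2$1) (M$2$2)"
  unfolding mat2_def vec_eq_iff forall_2 by simp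

lemma mat2_eq_iff: "mat2 a b c d = mat2 a' b' c' d' \<longleftrightarrow> a = a' \<and> b = b' \<and> c = c' \<and> d = d'"
  unfolding vec_eq_iff forall_2 by simp

lemma mat2_mult: "(mat2 a b c d :: 'a::semiring_1^2^2) ** mat2 e f g h = mat2 (a*e+b*g) (a*f+b*h) (c*e+d*g) (c*f+d*h)"
  unfolding vec_eq_iff forall_2 by (simp add: matrix_matrix_mult_def sum_2)

lemma mat_mat2: "(mat x :: 'a::zero^2^2) = mat2 x 0 0 x"
  unfolding vec_eq_iff forall_2 by (simp add: mat_def)

lemma mat2_mv1: "((mat2 a b c d :: 'a::semiring_1^2^2) *v v) $ 1 = a * v$1 + b * v$2"
  by (simp add: matrix_vector_mult_def sum_2)
lemma mat2_mv2: "((mat2 a b c d :: 'a::semiring_1^2^2) *v v) $ 2 = c * v$1 + d * v$2"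
  by (simp add: matrix_vector_mult_def sum_2)

fun mpow :: "'a::semiring_1^'n^'n \<Rightarrow> nat \<Rightarrow> 'a^'n^'n" where
  "mpow M 0 = mat 1" | "mpow M (Suc n) = M ** mpow M n"

lemma mpow_add: "mpow M (a + b) = mpow M a ** mpow M b"
  by (induction a) (simp_all add: matrix_mul_assoc)

lemma mpow_mult_one: "mpow M k = mat 1 \<Longrightarrow> mpow M (k * q) = mat 1"
  by (induction q) (simp_all add: mpow_add[symmetric] add.commute[of k], metis mpow_add matrix_mul_lid)

lemma mpow_mod: "mpow M k = mat 1 \<Longrightarrow> mpow M (n mod k) = mpow M n"
proof -
  assume h: "mpow M k = mat 1"
  have "mpow M n = mpow M (k * (n div k) + n mod k)" by simp
  also have "\<dots> = mpow M (n mod k)" by (simp only: mpow_add mpow_mult_one[OF h] matrix_mul_lid)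
  finally show ?thesis by simp
qed

lemma mpow_intertwine: "P ** X = Y ** P \<Longrightarrow> P ** mpow X n = mpow Y n ** P"
  by (induction n) (simp_all, metis matrix_mul_assoc)

lemma invertible_one: "invertible (mat 1 :: 'a::semiring_1^'n^'n)"
  unfolding invertible_def by (rule exI[of _ "mat 1"]) simp

lemma mpow_invertible: "invertible (X::'a::field^'n^'n) \<Longrightarrow> invertible (mpow X n)"
  by (induction n) (simp_all add: invertible_one invertible_mult)

lemma mat2_invertible: "(mat2 a b c d :: 'a::field^2^2) ** mat2 a' b' c' d' = mat 1 \<Longrightarrow> invertible (mat2 a b c d)"
  using invertible_right_inverse by blast

lemma eig_gen:
  fixes th al be c w1 w2 h z zi :: "'k::field"
  assumes h: "2 * h = 1" and eq': "al^2 + be^2 = th^2 - 4"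
  and E1: "(th*h + al*h) * w1 + (be*h) * w2 = c * w1"
  and E2: "(be*h) * w1 + (th*h - al*h) * w2 = c * w2"
  and w: "w1 \<noteq> 0 \<or> w2 \<noteq> 0" and zi: "z * zi = 1" and th: "th = z + zi"
  shows "c = z \<or> c = zi"
proof -
  define p where "p = th*h + al*h"
  define t where "t = th*h - al*h"
  define r where "r = be*h"
  have F1: "(p - c) * w1 + r * w2 = 0" using E1 unfolding p_def r_def by (simp add: algebra_simps)
  have F2: "r * w1 + (t - c) * w2 = 0" using E2 unfolding t_def r_def by (simp add: algebra_simps)
  have h4: "h * (h * 4) = 1"
  proof -
    have "(2*h)*(2*h) = 1" using h by simp
    then show ?thesis by (simp add: algebra_simps)
  qed
  have Y: "(p - c) * (t - c) - r^2 = c^2 - th * c + 1"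
  proof -
    have "(p - c) * (t - c) - r^2 = c^2 - (2*h) * th * c + h^2 * (th^2 - (al^2 + be^2))"
      unfolding p_def t_def r_def by (simp add: algebra_simps power2_eq_square)
    also have "\<dots> = c^2 - th * c + h * (h * 4)"
      unfolding eq' h by (simp add: algebra_simps power2_eq_square)
    finally show ?thesis using h4 by simp
  qed
  have "((p - c) * (t - c) - r^2) * w1 = (t - c) * ((p - c) * w1 + r * w2) - r * (r * w1 + (t - c) * w2)"
    by (simp add: algebra_simps power2_eq_square)
  then have X1: "(c^2 - th * c + 1) * w1 = 0" using F1 F2 Y by simp
  have "((p - c) * (t - c) - r^2) * w2 = (p - c) * (r * w1 + (t - c) * w2) - r * ((p - c) * w1 + r * w2)"
    by (simp add: algebra_simps power2_eq_square)
  then have X2: "(c^2 - th * c + 1) * w2 = 0" using F1 F2 Y by simp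
  have "c^2 - th * c + 1 = 0" using X1 X2 w by auto
  moreover have "(c - z) * (c - zi) = c^2 - th * c + z * zi"
    unfolding th by (simp add: algebra_simps power2_eq_square)
  ultimately have "(c - z) * (c - zi) = 0" using zi by simp
  then show ?thesis by auto
qed


locale Q7 =
  fixes m :: nat and K :: "'k::field set" and z al be :: 'k
  assumes two: "(2::'k) \<noteq> 0" and m3: "m \<ge> 3" and modd: "odd m" and sub: "is_subfield K"
    and prim: "primitive_root_of_unity m z" and thK: "z + inverse z \<in> K" and zK: "z \<notin> K"
    and aK: "al \<in> K" and bK: "be \<in> K" and eq: "al^2 + be^2 = (z + inverse z)^2 - 4"
begin

lemma K0: "0 \<in> K" and K1: "1 \<in> K" and Kadd: "x \<in> K \<Longrightarrow> y \<in> K \<Longrightarrow> x + y \<in> K"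
  and Kdiff: "x \<in> K \<Longrightarrow> y \<in> K \<Longrightarrow> x - y \<in> K" and Kmult: "x \<in> K \<Longrightarrow> y \<in> K \<Longrightarrow> x * y \<in> K"
  using sub unfolding is_subfield_def by auto

lemma Kinv: "x \<in> K \<Longrightarrow> inverse x \<in> K"
  using sub K0 unfolding is_subfield_def by (cases "x = 0") auto

lemma Kdiv: "x \<in> K \<Longrightarrow> y \<in> K \<Longrightarrow> x / y \<in> K"
  by (simp add: divide_inverse Kmult Kinv)

lemma Kneg: "x \<in> K \<Longrightarrow> - x \<in> K"
  using Kdiff[OF K0] by fastforce

lemma K2: "2 \<in> K" using Kadd[OF K1 K1] by (simp add: one_add_one)

lemma zm: "z ^ m = 1" and zk: "0 < k \<Longrightarrow> k < m \<Longrightarrow> z ^ k \<noteq> 1"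
  using prim unfolding primitive_root_of_unity_def by auto

lemma z0: "z \<noteq> 0" using zm m3 by (cases m) auto

lemma zz': "z * inverse z = 1" using z0 by simp

lemma zsq: "z ^ 2 \<noteq> 1"
proof
  assume h: "z^2 = 1"
  obtain k where "m = 2*k+1" using modd oddE by blast
  then have "z ^ m = z" by (simp add: power_add power_mult h)
  with zm zk[of 1] m3 show False by simp
qed

definition "th = z + inverse z"
definition "de = z - inverse z"

lemma de_sq: "de^2 = al^2 + be^2"
  unfolding de_def eq using zz' by (simp add: power2_eq_square algebra_simps)

lemma de0: "de \<noteq> 0"
proof
  assume "de = 0"
  then have "z * z = z * inverse z" unfolding de_def by simp
  with zz' zsq show False by (simp add: power2_eq_square)
qed

lemma two_z: "2 * z = th + de" unfolding th_def de_def by simp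

lemma be0: "be \<noteq> 0"
proof
  assume b: "be = 0"
  then have "(al - de) * (al + de) = 0" using de_sq by (simp add: power2_eq_square algebra_simps)
  then have "al = de \<or> al = - de" by (simp add: eq_neg_iff_add_eq_0)
  then have "z = (th + al) / 2 \<or> z = (th - al) / 2" using two_z two by (auto simp: field_simps)
  moreover have "(th + al) / 2 \<in> K" "(th - al) / 2 \<in> K" using thK aK K2
    by (simp_all add: th_def Kadd Kdiff Kdiv)
  ultimately show False using zK by metis
qed


definition "At = mat2 (th/2 + al/2) (be/2) (be/2) (th/2 - al/2)"
definition "Bm = (mat2 0 (-1) 1 0 :: 'k^2^2)"
definition "D = mat2 z 0 0 (inverse z)"
definition "dd = be^2 + (al - de)^2"
definition "P = mat2 be (-(al-de)) (al-de) be"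
definition "PI = mat2 (be/dd) ((al-de)/dd) (-(al-de)/dd) (be/dd)"

lemma dd0: "dd \<noteq> 0"
proof (cases "al = de")
  case True then show ?thesis unfolding dd_def using be0 by simp
next
  case False
  have "dd = 2 * de * (de - al)" unfolding dd_def using de_sq
    by algebra
  then show ?thesis using False de0 two by simp
qed

lemma P_PI: "P ** PI = mat 1" and PI_P: "PI ** P = mat 1"
proof -
  obtain di where h: "(be^2 + (al-de)^2) * di = 1" using dd0 unfolding dd_def
    by (metis right_inverse)
  have di: "di = inverse dd" unfolding dd_def using h by (metis inverse_unique)
  have x: "PI = mat2 (be*di) ((al-de)*di) (-(al-de)*di) (be*di)"
    unfolding PI_def di divide_inverse by simp
  show "P ** PI = mat 1"
    unfolding P_def x mat_mat2 mat2_mult mat2_eq_iff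
    using h by - (intro conjI; (algebra | simp add: algebra_simps))
  show "PI ** P = mat 1"
    unfolding P_def x mat_mat2 mat2_mult mat2_eq_iff
    using h by - (intro conjI; (algebra | simp add: algebra_simps))
qed

lemma P_At: "P ** At = D ** P"
proof -
  have e: "de^2 = al^2 + be^2" by (rule de_sq)
  obtain h where h: "2 * h = (1::'k)" "inverse 2 = h" using right_inverse[OF two] by blast
  obtain zi where zi: "z * zi = 1" "inverse z = zi" using zz' by simp
  show ?thesis unfolding P_def At_def D_def mat2_mult mat2_eq_iff divide_inverse h(2)
    using e h(1) zi unfolding th_def de_def zi(2)
    by - (intro conjI; (algebra | simp add: algebra_simps))
qed

lemma P_B: "P ** Bm = Bm ** P"
  unfolding P_def Bm_def mat2_mult mat2_eq_iff by simp


lemma mpow_D: "mpow D n = mat2 (z^n) 0 0 (inverse z ^ n)"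
  by (induction n) (simp_all add: D_def mat_mat2 mat2_mult)

lemma Bm2: "Bm ** Bm = mat2 (-1) 0 0 (-1)"
  by (simp add: Bm_def mat2_mult)

lemma mpow_B4: "mpow Bm 4 = mat 1"
  by (simp add: numeral_eq_Suc Bm_def mat_mat2 mat2_mult)

lemma mpow_Dm: "mpow D m = mat 1"
  by (simp add: mpow_D zm mat_mat2 power_inverse)

lemma inv_pow: "k \<le> m \<Longrightarrow> inverse z ^ k = z ^ (m - k)"
proof -
  assume k: "k \<le> m"
  have "z ^ (m - k) * z ^ k = 1" using k zm by (simp add: power_add[symmetric])
  then show ?thesis by (simp add: power_inverse field_simps z0)
qed

lemma inv_pow2: "k \<le> m \<Longrightarrow> z ^ k = inverse z ^ (m - k)"
proof -
  assume k: "k \<le> m"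
  have "z ^ (m - k) * z ^ k = 1" using k zm by (simp add: power_add[symmetric])
  then show ?thesis by (simp add: power_inverse field_simps z0)
qed

lemma Bswap: "mpow Bm j ** mat2 x 0 0 y = (if even j then mat2 x 0 0 y else mat2 y 0 0 x) ** mpow Bm j"
proof (induction j arbitrary: x y)
  case 0 then show ?case by simp
next
  case (Suc j)
  have "mpow Bm (Suc j) ** mat2 x 0 0 y = Bm ** (mpow Bm j ** mat2 x 0 0 y)"
    by (simp add: matrix_mul_assoc)
  also have "\<dots> = Bm ** ((if even j then mat2 x 0 0 y else mat2 y 0 0 x) ** mpow Bm j)"
    using Suc by simp
  also have "\<dots> = (if even (Suc j) then mat2 x 0 0 y else mat2 y 0 0 x) ** mpow Bm (Suc j)"
    by (simp add: matrix_mul_assoc Bm_def mat2_mult)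
  finally show ?case .
qed

lemma B_D: "k \<le> m \<Longrightarrow> mpow Bm j ** mpow D k = mpow D (if even j then k else m - k) ** mpow Bm j"
  unfolding mpow_D Bswap using inv_pow inv_pow2 by auto

definition "tau g = mpow D (fst g) ** mpow Bm (snd g)"
definition "mu g = mpow At (fst g) ** mpow Bm (snd g)"

lemma P_mu: "P ** mu g = tau g ** P"
proof -
  have "P ** mu g = (P ** mpow At (fst g)) ** mpow Bm (snd g)"
    by (simp add: mu_def matrix_mul_assoc)
  also have "\<dots> = mpow D (fst g) ** (P ** mpow Bm (snd g))"
    by (simp add: mpow_intertwine[OF P_At] matrix_mul_assoc)
  also have "\<dots> = tau g ** P"
    by (simp add: mpow_intertwine[OF P_B] matrix_mul_assoc tau_def)
  finally show ?thesis .
qed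

lemma tau_hom: "g \<in> Q_carrier m \<Longrightarrow> h \<in> Q_carrier m \<Longrightarrow> tau (Q_mult m g h) = tau g ** tau h"
proof -
  assume g: "g \<in> Q_carrier m" and h: "h \<in> Q_carrier m"
  obtain i j where gi: "g = (i, j)" by (cases g)
  obtain k l where hk: "h = (k, l)" by (cases h)
  have k: "k \<le> m" using h hk by (simp add: Q_carrier_def)
  define k' where "k' = (if even j then k else m - k)"
  have "tau g ** tau h = mpow D i ** (mpow Bm j ** mpow D k) ** mpow Bm l"
    by (simp add: tau_def gi hk matrix_mul_assoc)
  also have "\<dots> = mpow D (i + k') ** mpow Bm (j + l)"
    unfolding B_D[OF k] k'_def[symmetric] by (simp add: mpow_add matrix_mul_assoc)
  also have "\<dots> = mpow D ((i + k') mod m) ** mpow Bm ((j + l) mod 4)"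
    by (simp add: mpow_mod[OF mpow_Dm] mpow_mod[OF mpow_B4])
  also have "\<dots> = tau (Q_mult m g h)"
    by (simp add: tau_def Q_mult_def gi hk k'_def)
  finally show ?thesis by simp
qed

lemma mu_tau: "mu g = PI ** tau g ** P"
proof -
  have "PI ** (P ** mu g) = mu g" by (simp add: matrix_mul_assoc PI_P)
  then show ?thesis by (simp add: P_mu matrix_mul_assoc)
qed

lemma mu_hom: "g \<in> Q_carrier m \<Longrightarrow> h \<in> Q_carrier m \<Longrightarrow> mu (Q_mult m g h) = mu g ** mu h"
proof -
  assume g: "g \<in> Q_carrier m" and h: "h \<in> Q_carrier m"
  have "mu g ** mu h = PI ** tau g ** (P ** PI) ** tau h ** P"
    by (simp add: mu_tau matrix_mul_assoc)
  also have "\<dots> = PI ** (tau g ** tau h) ** P" by (simp add: P_PI matrix_mul_assoc)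
  finally show ?thesis using tau_hom[OF g h] mu_tau by simp
qed


definition inK :: "'k^2^2 \<Rightarrow> bool" where "inK M \<longleftrightarrow> (\<forall>i j. M $ i $ j \<in> K)"

lemma inK_mat2: "inK (mat2 a b c d) \<longleftrightarrow> a \<in> K \<and> b \<in> K \<and> c \<in> K \<and> d \<in> K"
  unfolding inK_def forall_2 by simp

lemma inK_mult: "inK M \<Longrightarrow> inK N \<Longrightarrow> inK (M ** N)"
  unfolding inK_def by (simp add: matrix_matrix_mult_def sum_2 Kadd Kmult)

lemma inK_one: "inK (mat 1)" unfolding mat_mat2 inK_mat2 using K0 K1 by simp

lemma inK_mpow: "inK X \<Longrightarrow> inK (mpow X n)"
  by (induction n) (simp_all add: inK_one inK_mult)

lemma inK_At: "inK At"
  unfolding At_def inK_mat2 using thK aK bK K2 by (simp add: th_def Kadd Kdiff Kdiv)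

lemma inK_Bm: "inK Bm"
  unfolding Bm_def inK_mat2 using K0 K1 Kneg by simp

lemma inK_mu: "inK (mu g)"
  unfolding mu_def by (simp add: inK_mult inK_mpow inK_At inK_Bm)

lemma P_inv: "invertible P" using P_PI invertible_right_inverse by blast
lemma PI_inv: "invertible PI" using PI_P invertible_right_inverse by blast

lemma D_inv: "invertible D"
  unfolding invertible_right_inverse D_def
  by (rule exI[of _ "mat2 (inverse z) 0 0 z"]) (simp add: mat2_mult mat_mat2 z0)

lemma B_inv: "invertible Bm"
  unfolding invertible_right_inverse Bm_def
  by (rule exI[of _ "mat2 0 1 (-1) 0"]) (simp add: mat2_mult mat_mat2)

lemma tau_inv: "invertible (tau g)"
  unfolding tau_def by (simp add: invertible_mult mpow_invertible D_inv B_inv)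

lemma mu_inv: "invertible (mu g)"
  unfolding mu_tau by (simp add: invertible_mult tau_inv P_inv PI_inv)

lemma zpow_inj: "i < m \<Longrightarrow> i2 < m \<Longrightarrow> z ^ i = z ^ i2 \<Longrightarrow> i = i2"
proof (rule ccontr)
  have main: "a < b \<Longrightarrow> b < m \<Longrightarrow> z ^ a = z ^ b \<Longrightarrow> False" for a b
  proof -
    assume ab: "a < b" "b < m" "z ^ a = z ^ b"
    have "z ^ b = z ^ a * z ^ (b - a)" unfolding power_add[symmetric] using ab(1) by simp
    then have "z ^ (b - a) = 1" using ab z0 by simp
    then show False using zk[of "b - a"] ab by simp
  qed
  assume "i < m" "i2 < m" "z ^ i = z ^ i2" "i \<noteq> i2"
  then show False using main[of i i2] main[of i2 i] by (cases "i < i2") auto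
qed

lemma zpow_neg: "z ^ i \<noteq> - (z ^ i2)"
proof
  assume "z ^ i = - (z ^ i2)"
  then have "(z ^ i) ^ m = (- (z ^ i2)) ^ m" by simp
  then have "(1::'k) = - 1" using modd zm by (simp add: power_mult[symmetric] mult.commute[of _ m] power_mult power_minus_odd)
  then show False using two by (simp add: eq_neg_iff_add_eq_0 one_add_one)
qed

lemma tau_inj: "inj_on tau (Q_carrier m)"
proof (rule inj_onI)
  fix g h assume g: "g \<in> Q_carrier m" and h: "h \<in> Q_carrier m" and e: "tau g = tau h"
  obtain i j where gi: "g = (i, j)" by (cases g)
  obtain k l where hk: "h = (k, l)" by (cases h)
  have r: "i < m" "k < m" "j < 4" "l < 4" using g h gi hk by (auto simp: Q_carrier_def)
  have j4: "j = 0 \<or> j = 1 \<or> j = 2 \<or> j = 3" "l = 0 \<or> l = 1 \<or> l = 2 \<or> l = 3" using r by auto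
  have "z ^ i = z ^ k \<and> j = l"
    using e j4 zpow_neg[of i k] zpow_neg[of k i] z0
    unfolding gi hk tau_def mpow_D
    by (auto simp: numeral_eq_Suc Bm_def mat_mat2 mat2_mult mat2_eq_iff power_inverse)
  then show "g = h" using zpow_inj[OF r(1,2)] gi hk by simp
qed


lemma eig:
  assumes w: "w1 \<noteq> 0 \<or> w2 \<noteq> 0"
    and e1: "(th/2 + al/2) * w1 + (be/2) * w2 = c * w1"
    and e2: "(be/2) * w1 + (th/2 - al/2) * w2 = c * w2"
  shows "c = z \<or> c = inverse z"
proof -
  obtain h where h: "2 * h = (1::'k)" "inverse 2 = h" using right_inverse[OF two] by blast
  obtain zi where zi: "z * zi = 1" "inverse z = zi" using zz' by simp
  have eq': "al^2 + be^2 = th^2 - 4" using eq unfolding th_def .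
  have d2: "\<And>x. x / 2 = x * h" unfolding divide_inverse h(2) by (rule refl)
  have E1: "(th*h + al*h) * w1 + (be*h) * w2 = c * w1" using e1 unfolding d2 .
  have E2: "(be*h) * w1 + (th*h - al*h) * w2 = c * w2" using e2 unfolding d2 .
  have "c = z \<or> c = zi" by (rule eig_gen[OF h(1) eq' E1 E2 w zi(1)]) (simp only: th_def zi(2))
  then show ?thesis using zi(2) by auto
qed

lemma vec_over_iff: "v \<in> vec_over K \<longleftrightarrow> v $ 1 \<in> K \<and> v $ 2 \<in> K"
  unfolding vec_over_def forall_2 by simp

lemma At_mv: "At *v w = (\<chi> i. if i = 1 then (th/2 + al/2) * w$1 + (be/2) * w$2 else (be/2) * w$1 + (th/2 - al/2) * w$2)"
  unfolding At_def vec_eq_iff forall_2 by (simp add: mat2_mv1 mat2_mv2)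

lemma irred_aux:
  assumes W: "subspace_over K W" and W0: "W \<noteq> {0}" and inv: "\<forall>w\<in>W. At *v w \<in> W"
  shows "W = vec_over K"
proof -
  have Wsub: "W \<subseteq> vec_over K" and add: "\<And>v w. v \<in> W \<Longrightarrow> w \<in> W \<Longrightarrow> v + w \<in> W"
    and sc: "\<And>c w. c \<in> K \<Longrightarrow> w \<in> W \<Longrightarrow> c *s w \<in> W" and W0': "0 \<in> W"
    using W unfolding subspace_over_def by auto
  obtain w where wW: "w \<in> W" and wn: "w \<noteq> 0" using W0 W0' by blast
  have wnz: "w $ 1 \<noteq> 0 \<or> w $ 2 \<noteq> 0" using wn unfolding vec_eq_iff forall_2 by auto
  define u where "u = At *v w"
  have uW: "u \<in> W" using inv wW u_def by simp
  have wK: "w $ 1 \<in> K" "w $ 2 \<in> K" using wW Wsub vec_over_iff by auto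
  have uK: "u $ 1 \<in> K" "u $ 2 \<in> K" using uW Wsub vec_over_iff by auto
  have u1: "u $ 1 = (th/2 + al/2) * w$1 + (be/2) * w$2" and u2: "u $ 2 = (be/2) * w$1 + (th/2 - al/2) * w$2"
    unfolding u_def At_mv by simp_all
  define dt where "dt = w$1 * u$2 - w$2 * u$1"
  have dt: "dt \<noteq> 0"
  proof
    assume d0: "dt = 0"
    obtain c where cK: "c \<in> K" and c1: "u$1 = c * w$1" and c2: "u$2 = c * w$2"
    proof (cases "w$1 = 0")
      case True
      then have "w$2 \<noteq> 0" using wnz by simp
      moreover have "u$1 = 0" using d0 True \<open>w$2 \<noteq> 0\<close> by (simp add: dt_def)
      ultimately show ?thesis using that[of "u$2/w$2"] True uK wK Kdiv by simp
    next
      case False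
      have "u$2 = u$1 / w$1 * w$2" using d0 False by (simp add: dt_def field_simps)
      then show ?thesis using that[of "u$1/w$1"] False uK wK Kdiv by simp
    qed
    have "c = z \<or> c = inverse z" using eig[OF wnz, of c] u1 u2 c1 c2 by simp
    moreover have "inverse z \<notin> K" using zK Kinv by force
    ultimately show False using cK zK by auto
  qed
  have "vec_over K \<subseteq> W"
  proof
    fix v assume vK: "v \<in> vec_over K"
    then have vK': "v$1 \<in> K" "v$2 \<in> K" using vec_over_iff by auto
    define c1 where "c1 = (v$1 * u$2 - v$2 * u$1) / dt"
    define c2 where "c2 = (w$1 * v$2 - w$2 * v$1) / dt"
    have c1K: "c1 \<in> K" and c2K: "c2 \<in> K" unfolding c1_def c2_def dt_def
      using vK' uK wK by (simp_all add: Kdiv Kdiff Kmult)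
    have n1: "(v $ 1 * u $ 2 - v $ 2 * u $ 1) * w $ 1 + (w $ 1 * v $ 2 - w $ 2 * v $ 1) * u $ 1 = v$1 * dt"
      unfolding dt_def by (simp add: algebra_simps)
    have n2: "(v $ 1 * u $ 2 - v $ 2 * u $ 1) * w $ 2 + (w $ 1 * v $ 2 - w $ 2 * v $ 1) * u $ 2 = v$2 * dt"
      unfolding dt_def by (simp add: algebra_simps)
    have e1: "c1 * w$1 + c2 * u$1 = v$1"
      unfolding c1_def c2_def times_divide_eq_left add_divide_distrib[symmetric] n1 using dt by simp
    have e2: "c1 * w$2 + c2 * u$2 = v$2"
      unfolding c1_def c2_def times_divide_eq_left add_divide_distrib[symmetric] n2 using dt by simp
    have "v = c1 *s w + c2 *s u"
      unfolding vec_eq_iff forall_2 using e1 e2 by simp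
    then show "v \<in> W" using add sc c1K c2K wW uW by simp
  qed
  then show ?thesis using Wsub by blast
qed

end

theorem mainTheorem7:
  fixes m s q :: nat and K :: "'k::field set" and \<zeta> \<alpha> \<beta> :: 'k
  assumes "is_alg_closure_of_prime_field TYPE('k) s"
    and "odd s"
    and "m \<ge> 3" and "odd m"
    and "coprime s m"
    and "\<exists>e\<ge>1. q = s ^ e"
    and "is_subfield K" and "finite K" and "card K = q"
    and "primitive_root_of_unity m \<zeta>"
    and "\<zeta> + inverse \<zeta> \<in> K" and "\<zeta> \<notin> K"
    and "\<alpha> \<in> K" and "\<beta> \<in> K"
    and "\<alpha>^2 + \<beta>^2 = (\<zeta> + inverse \<zeta>)^2 - 4"
  shows "\<beta> \<noteq> 0 \<and>
    (let \<theta> = \<zeta> + inverse \<zeta>;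
         A = mat2 \<alpha> \<beta> \<beta> (- \<alpha>);
         At = mat (\<theta> / 2) + (\<chi> i j. (1 / 2) * A $ i $ j);
         B = mat2 0 (-1) 1 0
     in \<exists>\<mu>. is_rep2 m K \<mu> \<and> \<mu> Q_a = At \<and> \<mu> Q_b = B \<and>
            faithful_rep m \<mu> \<and> irreducible_rep m K \<mu> \<and>
            (\<exists>\<tau>. is_rep2 m UNIV \<tau> \<and> \<tau> Q_a = mat2 \<zeta> 0 0 (inverse \<zeta>) \<and> \<tau> Q_b = B \<and>
                  equivalent_reps m \<mu> \<tau>))"
proof -
  have pr: "prime s" and s0: "of_nat s = (0::'k)"
    using assms(1) unfolding is_alg_closure_of_prime_field_def by auto
  have two: "(2::'k) \<noteq> 0"
  proof
    assume t: "(2::'k) = 0"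
    obtain k where sk: "s = 2 * k + 1" using assms(2) oddE by blast
    have "(of_nat s :: 'k) = 2 * of_nat k + 1" unfolding sk by simp
    then have "(of_nat s :: 'k) = 1" using t by simp
    then show False using s0 by simp
  qed
  interpret Q: Q7 m K \<zeta> \<alpha> \<beta>
    by unfold_locales (use assms two in auto)
  have c10: "(1, 0) \<in> Q_carrier m" using assms(3) by (simp add: Q_carrier_def)
  have mua: "Q.mu Q_a = Q.At" by (simp add: Q.mu_def Q_a_def)
  have mub: "Q.mu Q_b = Q.Bm" by (simp add: Q.mu_def Q_b_def)
  have taua: "Q.tau Q_a = mat2 \<zeta> 0 0 (inverse \<zeta>)" by (simp add: Q.tau_def Q_a_def Q.D_def)
  have taub: "Q.tau Q_b = Q.Bm" by (simp add: Q.tau_def Q_b_def)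
  have Aeq: "Q.At = mat ((\<zeta> + inverse \<zeta>) / 2) + (\<chi> i j. (1 / 2) * mat2 \<alpha> \<beta> \<beta> (- \<alpha>) $ i $ j)"
    unfolding Q.At_def Q.th_def vec_eq_iff forall_2 by (simp add: mat_def)
  have rep_mu: "is_rep2 m K Q.mu"
    unfolding is_rep2_def GL2_def using Q.inK_mu Q.mu_inv Q.mu_hom unfolding Q.inK_def by auto
  have rep_tau: "is_rep2 m UNIV Q.tau"
    unfolding is_rep2_def GL2_def using Q.tau_inv Q.tau_hom by auto
  have faith: "faithful_rep m Q.mu"
    unfolding faithful_rep_def
  proof (rule inj_onI)
    fix g h assume g: "g \<in> Q_carrier m" and h: "h \<in> Q_carrier m" and e: "Q.mu g = Q.mu h"
    have "Q.tau g ** Q.P = Q.tau h ** Q.P" using e Q.P_mu by metis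
    then have "Q.tau g ** Q.P ** Q.PI = Q.tau h ** Q.P ** Q.PI" by simp
    then have "Q.tau g = Q.tau h" by (simp add: matrix_mul_assoc[symmetric] Q.P_PI)
    then show "g = h" using Q.tau_inj g h by (simp add: inj_on_def)
  qed
  have irr: "irreducible_rep m K Q.mu"
    unfolding irreducible_rep_def
  proof
    assume "\<exists>W. subspace_over K W \<and> W \<noteq> {0} \<and> W \<noteq> vec_over K \<and>
            (\<forall>g\<in>Q_carrier m. \<forall>w\<in>W. Q.mu g *v w \<in> W)"
    then obtain W where W: "subspace_over K W" "W \<noteq> {0}" "W \<noteq> vec_over K"
      and inv: "\<forall>g\<in>Q_carrier m. \<forall>w\<in>W. Q.mu g *v w \<in> W" by blast
    have "\<forall>w\<in>W. Q.At *v w \<in> W" using inv c10 mua by (auto simp: Q_a_def)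
    then show False using Q.irred_aux[OF W(1,2)] W(3) by simp
  qed
  have equiv: "equivalent_reps m Q.mu Q.tau"
    unfolding equivalent_reps_def using Q.P_inv Q.P_mu by blast
  show ?thesis
    unfolding Let_def
    using Q.be0 rep_mu mua Aeq mub faith irr rep_tau taua taub equiv
    unfolding Q.Bm_def by metis
qed

end
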